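(* Let $k\ge 2$ be an integer. Assume that for every integer $d$ with $2\le d\le k$, every $\mathcal{T}\in\mathrm{Sym}(2,d)$ has a symmetric best rank one approximation. Then for every integer $n\ge 3$ and every integer $d$ with $2\le d\le k$, every $\mathcal{T}\in\mathrm{Sym}(n,d)$ has a symmetric best rank one approximation.
   Context: $\mathrm{Sym}(n,d)$ is the space of real tensors $[t_{i_1,\ldots,i_d}]_{i_1,\ldots,i_d=1}^n$ invariant under all permutations of indices. Norm $\|\mathcal{T}\|=\sqrt{\sum t_{i_1,\ldots,i_d}^2}$; $\mathrm{S}^{n-1}$ is the Euclidean unit sphere in $\mathbb{R}^n$. A best rank one approximation of $\mathcal{T}$ is a tensor $a\,\mathbf{u}_1\otimes\cdots\otimes\mathbf{u}_d$ ($a\in\mathbb{R}$, $\mathbf{u}_j\in\mathrm{S}^{n-1}$) minimizing $\|\mathcal{T}-s\,\mathbf{x}_1\otimes\cdots\otimes\mathbf{x}_d\|$ over $s\in\mathbb{R}$, $\mathbf{x}_j\in\mathrm{S}^{n-1}$; it is symmetric if it is of the form $b\,\mathbf{u}\otimes\cdots\otimes\mathbf{u}$. *)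

theory Defs
  imports Complex_Main "HOL-Combinatorics.Permutations"
begin

text \<open>A tensor of order d over R^n is a function on index lists xs of length d
  with entries in {0..<n} (values outside this index set are irrelevant).\<close>

definition idx :: "nat \<Rightarrow> nat \<Rightarrow> nat list set" where
  "idx n d = {xs. length xs = d \<and> set xs \<subseteq> {..<n}}"

definition sym_tensor :: "nat \<Rightarrow> nat \<Rightarrow> (nat list \<Rightarrow> real) \<Rightarrow> bool" where
  "sym_tensor n d T = (\<forall>xs\<in>idx n d. \<forall>p. p permutes {..<d} \<longrightarrow> T (permute_list p xs) = T xs)"

definition tnorm :: "nat \<Rightarrow> nat \<Rightarrow> (nat list \<Rightarrow> real) \<Rightarrow> real" where
  "tnorm n d T = sqrt (\<Sum>xs\<in>idx n d. (T xs)\<^sup>2)"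

definition unit_vec :: "nat \<Rightarrow> (nat \<Rightarrow> real) \<Rightarrow> bool" where
  "unit_vec n u = ((\<Sum>i<n. (u i)\<^sup>2) = 1)"

definition rank_one :: "nat \<Rightarrow> real \<Rightarrow> (nat \<Rightarrow> nat \<Rightarrow> real) \<Rightarrow> nat list \<Rightarrow> real" where
  "rank_one d s x = (\<lambda>xs. s * (\<Prod>j<d. x j (xs ! j)))"

definition best_rank_one ::
  "nat \<Rightarrow> nat \<Rightarrow> (nat list \<Rightarrow> real) \<Rightarrow> real \<Rightarrow> (nat \<Rightarrow> nat \<Rightarrow> real) \<Rightarrow> bool" where
  "best_rank_one n d T a u =
     ((\<forall>j<d. unit_vec n (u j)) \<and>
      (\<forall>s x. (\<forall>j<d. unit_vec n (x j)) \<longrightarrow>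
         tnorm n d (\<lambda>xs. T xs - rank_one d a u xs) \<le> tnorm n d (\<lambda>xs. T xs - rank_one d s x xs)))"

definition has_sym_best_rank_one :: "nat \<Rightarrow> nat \<Rightarrow> (nat list \<Rightarrow> real) \<Rightarrow> bool" where
  "has_sym_best_rank_one n d T = (\<exists>b v. unit_vec n v \<and> best_rank_one n d T b (\<lambda>_. v))"

end

theory Submission imports Defs "HOL-Analysis.Analysis" begin
definition ev :: "nat \<Rightarrow> nat \<Rightarrow> (nat list \<Rightarrow> real) \<Rightarrow> (nat \<Rightarrow> nat \<Rightarrow> real) \<Rightarrow> real" where
  "ev n d T x = (\<Sum>xs\<in>idx n d. T xs * (\<Prod>j<d. x j (xs!j)))"

lemma finite_idx[simp]: "finite (idx n d)"
proof -
  have "idx n d = {xs. set xs \<subseteq> {..<n} \<and> length xs = d}" by (auto simp: idx_def)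
  then show ?thesis using finite_lists_length_eq[of "{..<n}" d] by simp
qed

lemma idx_Suc: "idx n (Suc d) = (\<lambda>(zs,i). zs@[i]) ` (idx n d \<times> {..<n})"
proof (rule set_eqI, rule iffI)
  fix xs assume "xs \<in> idx n (Suc d)"
  then have l: "length xs = Suc d" "set xs \<subseteq> {..<n}" by (auto simp: idx_def)
  then obtain zs i where "xs = zs @ [i]" by (metis length_Suc_conv_rev)
  with l show "xs \<in> (\<lambda>(zs,i). zs@[i]) ` (idx n d \<times> {..<n})"
    by (auto simp: idx_def image_iff)
qed (auto simp: idx_def)

lemma inj_snoc: "inj_on (\<lambda>(zs,i). zs@[i]) A"
  by (auto simp: inj_on_def)

lemma sum_idx_Suc: "(\<Sum>xs\<in>idx n (Suc d). h xs) = (\<Sum>zs\<in>idx n d. \<Sum>i<n. h (zs@[i]))"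
proof -
  have "(\<Sum>xs\<in>idx n (Suc d). h xs) = (\<Sum>p\<in>idx n d \<times> {..<n}. h ((\<lambda>(zs,i). zs@[i]) p))"
    unfolding idx_Suc by (rule sum.reindex[OF inj_snoc, unfolded comp_def])
  also have "\<dots> = (\<Sum>zs\<in>idx n d. \<Sum>i<n. h (zs@[i]))"
    by (simp add: sum.cartesian_product split_def)
  finally show ?thesis .
qed

lemma prod_snoc: "length zs = d \<Longrightarrow> (\<Prod>j<Suc d. g j ((zs@[i])!j)) = (\<Prod>j<d. g j (zs!j)) * g d i"
proof -
  assume l: "length zs = d"
  have "(\<Prod>j<d. g j ((zs@[i])!j)) = (\<Prod>j<d. g j (zs!j))"
    by (rule prod.cong) (auto simp: nth_append l)
  moreover have "(zs@[i])!d = i" using l by (metis nth_append_length)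
  ultimately show ?thesis by simp
qed

lemma prod_sum_idx: "(\<Sum>xs\<in>idx n d. \<Prod>j<d. (g::nat\<Rightarrow>nat\<Rightarrow>real) j (xs!j)) = (\<Prod>j<d. \<Sum>i<n. g j i)"
proof (induction d)
  case 0
  have "idx n 0 = {[]}" by (auto simp: idx_def)
  then show ?case by simp
next
  case (Suc d)
  have "(\<Sum>xs\<in>idx n (Suc d). \<Prod>j<Suc d. g j (xs!j))
     = (\<Sum>zs\<in>idx n d. \<Sum>i<n. (\<Prod>j<d. g j (zs!j)) * g d i)"
    by (rule trans[OF sum_idx_Suc], rule sum.cong, simp, rule sum.cong, simp,
        rule prod_snoc, simp add: idx_def)
  also have "\<dots> = (\<Sum>zs\<in>idx n d. \<Prod>j<d. g j (zs!j)) * (\<Sum>i<n. g d i)"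
    by (simp add: sum_product)
  finally show ?case using Suc by simp
qed

definition sq :: "nat \<Rightarrow> nat \<Rightarrow> (nat list \<Rightarrow> real) \<Rightarrow> real" where
  "sq n d T = (\<Sum>xs\<in>idx n d. (T xs)\<^sup>2)"

lemma tnorm_le_iff: "tnorm n d A \<le> tnorm n d B \<longleftrightarrow> sq n d A \<le> sq n d B"
  by (simp add: tnorm_def sq_def)

lemma sq_diff:
  assumes "\<forall>j<d. unit_vec n (x j)"
  shows "sq n d (\<lambda>xs. T xs - rank_one d s x xs) = sq n d T - 2 * s * ev n d T x + s\<^sup>2"
proof -
  have one: "(\<Sum>xs\<in>idx n d. (\<Prod>j<d. x j (xs!j))\<^sup>2) = 1"
  proof -
    have "(\<Sum>xs\<in>idx n d. (\<Prod>j<d. x j (xs!j))\<^sup>2) = (\<Sum>xs\<in>idx n d. \<Prod>j<d. (x j (xs!j))\<^sup>2)"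
      by (simp add: prod_power_distrib)
    also have "\<dots> = (\<Prod>j<d. \<Sum>i<n. (x j i)\<^sup>2)" by (rule prod_sum_idx)
    also have "\<dots> = 1" using assms by (simp add: unit_vec_def)
    finally show ?thesis .
  qed
  have "sq n d (\<lambda>xs. T xs - rank_one d s x xs) =
     (\<Sum>xs\<in>idx n d. (T xs)\<^sup>2 - 2 * s * (T xs * (\<Prod>j<d. x j (xs!j))) + s\<^sup>2 * (\<Prod>j<d. x j (xs!j))\<^sup>2)"
    unfolding sq_def rank_one_def by (rule sum.cong) (auto simp: power2_eq_square algebra_simps)
  also have "\<dots> = sq n d T - 2 * s * ev n d T x + s\<^sup>2 * (\<Sum>xs\<in>idx n d. (\<Prod>j<d. x j (xs!j))\<^sup>2)"
    by (simp add: sum.distrib sum_subtractf sum_distrib_left sq_def ev_def)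
  finally show ?thesis using one by simp
qed

lemma best_imp_max:
  assumes "best_rank_one n d T b (\<lambda>_. v)" "\<forall>j<d. unit_vec n (x j)"
  shows "(ev n d T x)\<^sup>2 \<le> (ev n d T (\<lambda>_. v))\<^sup>2"
proof -
  have uv: "\<forall>j<d. unit_vec n ((\<lambda>_. v) j)" using assms(1) by (simp add: best_rank_one_def)
  have "sq n d (\<lambda>xs. T xs - rank_one d b (\<lambda>_. v) xs) \<le> sq n d (\<lambda>xs. T xs - rank_one d (ev n d T x) x xs)"
    using assms by (simp add: best_rank_one_def tnorm_le_iff)
  then have "sq n d T - 2 * b * ev n d T (\<lambda>_. v) + b\<^sup>2 \<le> sq n d T - 2 * ev n d T x * ev n d T x + (ev n d T x)\<^sup>2"
    using sq_diff[OF uv] sq_diff[OF assms(2)] by simp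
  moreover have "0 \<le> (b - ev n d T (\<lambda>_. v))\<^sup>2" by simp
  ultimately show ?thesis by (simp add: power2_eq_square algebra_simps)
qed

lemma max_imp_best:
  assumes "unit_vec n v" "\<forall>x. (\<forall>j<d. unit_vec n (x j)) \<longrightarrow> (ev n d T x)\<^sup>2 \<le> (ev n d T (\<lambda>_. v))\<^sup>2"
  shows "has_sym_best_rank_one n d T"
  unfolding has_sym_best_rank_one_def
proof (intro exI conjI)
  show "unit_vec n v" by fact
  show "best_rank_one n d T (ev n d T (\<lambda>_. v)) (\<lambda>_. v)"
    unfolding best_rank_one_def tnorm_le_iff
  proof (intro conjI allI impI)
    fix j assume "j < d"
    show "unit_vec n v" using assms by simp
  next
    fix s x assume x: "\<forall>j<d. unit_vec n (x j)"
    have uv: "\<forall>j<d. unit_vec n ((\<lambda>_. v) j)" using assms by simp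
    have le: "(ev n d T x)\<^sup>2 \<le> (ev n d T (\<lambda>_. v))\<^sup>2" using assms(2) x by blast
    have e1: "sq n d (\<lambda>xs. T xs - rank_one d (ev n d T (\<lambda>_. v)) (\<lambda>_. v) xs) = sq n d T - 2 * ev n d T (\<lambda>_. v) * ev n d T (\<lambda>_. v) + (ev n d T (\<lambda>_. v))\<^sup>2"
      by (rule sq_diff[OF uv])
    have e2: "sq n d (\<lambda>xs. T xs - rank_one d s x xs) = sq n d T - 2 * s * ev n d T x + s\<^sup>2"
      by (rule sq_diff[OF x])
    have "0 \<le> (s - ev n d T x)\<^sup>2" by simp
    then show "sq n d (\<lambda>xs. T xs - rank_one d (ev n d T (\<lambda>_. v)) (\<lambda>_. v) xs) \<le> sq n d (\<lambda>xs. T xs - rank_one d s x xs)"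
      using le unfolding e1 e2 by (simp add: power2_eq_square algebra_simps)
  qed
qed


definition evsym :: "nat \<Rightarrow> nat \<Rightarrow> (nat list \<Rightarrow> real) \<Rightarrow> bool" where
  "evsym n d T = (\<forall>x p. p permutes {..<d} \<longrightarrow> ev n d T (x \<circ> p) = ev n d T x)"

lemma ev_cong: "(\<And>j i. j < d \<Longrightarrow> i < n \<Longrightarrow> x j i = x' j i) \<Longrightarrow> ev n d T x = ev n d T x'"
  unfolding ev_def
  by (rule sum.cong, simp, rule arg_cong[where f="\<lambda>a. _ * a"], rule prod.cong, simp)
     (auto simp: idx_def, metis lessThan_iff nth_mem subsetD)

lemma permute_idx:
  assumes "p permutes {..<d}" "xs \<in> idx n d"
  shows "permute_list p xs \<in> idx n d"
  using assms by (simp add: idx_def)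

lemma sym_evsym:
  assumes "sym_tensor n d T"
  shows "evsym n d T"
  unfolding evsym_def
proof (intro allI impI)
  fix x :: "nat \<Rightarrow> nat \<Rightarrow> real" and p assume p: "p permutes {..<d}"
  have ip: "inv p permutes {..<d}" using p by (rule permutes_inv)
  let ?s = "permute_list (inv p)"
  let ?G = "\<lambda>ys. T ys * (\<Prod>j<d. x j (ys!j))"
  have "ev n d T (x \<circ> p) = (\<Sum>xs\<in>idx n d. ?G (?s xs))"
    unfolding ev_def
  proof (rule sum.cong)
    fix xs assume xs: "xs \<in> idx n d"
    then have l: "length xs = d" by (simp add: idx_def)
    have "(\<Prod>j<d. (x \<circ> p) j (xs!j)) = (\<Prod>j<d. (\<lambda>j. x j (xs ! inv p j)) (p j))"
      by (rule prod.cong) (auto simp: permutes_inverses(2)[OF p])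
    also have "\<dots> = (\<Prod>j<d. x j (xs ! inv p j))"
      using prod.permute[OF p, of "\<lambda>j. x j (xs ! inv p j)"] by (simp add: comp_def)
    also have "\<dots> = (\<Prod>j<d. x j (?s xs ! j))"
      by (rule prod.cong) (auto simp: permute_list_nth l ip)
    finally have 1: "(\<Prod>j<d. (x \<circ> p) j (xs!j)) = (\<Prod>j<d. x j (?s xs ! j))" .
    have "T (?s xs) = T xs" using assms xs ip by (simp add: sym_tensor_def)
    with 1 show "T xs * (\<Prod>j<d. (x \<circ> p) j (xs!j)) = ?G (?s xs)" by simp
  qed simp
  also have "\<dots> = (\<Sum>ys\<in>idx n d. ?G ys)"
  proof (rule sum.reindex_bij_witness[where j = "?s" and i = "permute_list p"])
    fix a assume a: "a \<in> idx n d"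
    then have l: "length a = d" by (simp add: idx_def)
    show "permute_list p (?s a) = a"
      using permute_list_compose[of p a "inv p"] p l permutes_inv_o(2)[OF p] by simp
    show "?s (permute_list p a) = a"
      using permute_list_compose[of "inv p" a p] ip l permutes_inv_o(1)[OF p] by simp
    show "?s a \<in> idx n d" using permute_idx[OF ip a] .
    show "permute_list p a \<in> idx n d" using permute_idx[OF p a] .
  qed simp
  finally show "ev n d T (x \<circ> p) = ev n d T x" by (simp add: ev_def)
qed

definition contract :: "nat \<Rightarrow> (nat list \<Rightarrow> real) \<Rightarrow> (nat \<Rightarrow> real) \<Rightarrow> nat list \<Rightarrow> real" where
  "contract n T y zs = (\<Sum>i<n. T (zs@[i]) * y i)"

lemma ev_snoc: "ev n (Suc d) T x = ev n d (contract n T (x d)) x"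
proof -
  have "ev n (Suc d) T x = (\<Sum>zs\<in>idx n d. \<Sum>i<n. T (zs@[i]) * ((\<Prod>j<d. x j (zs!j)) * x d i))"
    unfolding ev_def sum_idx_Suc
    by (rule sum.cong, simp, rule sum.cong, simp, subst prod_snoc) (auto simp: idx_def)
  also have "\<dots> = ev n d (contract n T (x d)) x"
    unfolding ev_def contract_def
    by (rule sum.cong, simp) (simp add: sum_distrib_left mult_ac)
  finally show ?thesis .
qed

lemma evsym_contract:
  assumes "evsym n (Suc d) T"
  shows "evsym n d (contract n T y)"
  unfolding evsym_def
proof (intro allI impI)
  fix x :: "nat \<Rightarrow> nat \<Rightarrow> real" and p assume p: "p permutes {..<d}"
  have p': "p permutes {..<Suc d}" using p by (rule permutes_subset) auto
  have pd: "p d = d" using p by (simp add: permutes_def)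
  have pj: "j < d \<Longrightarrow> p j < d" for j using permutes_in_image[OF p] by simp
  have e: "((x(d:=y)) \<circ> p) d = y" by (simp add: pd)
  have "ev n (Suc d) T ((x(d:=y)) \<circ> p) = ev n d (contract n T y) ((x(d:=y)) \<circ> p)"
    using ev_snoc[of n d T "(x(d:=y)) \<circ> p"] e by simp
  also have "\<dots> = ev n d (contract n T y) (x \<circ> p)"
  proof (rule ev_cong)
    fix j i assume "j < d"
    then have "p j \<noteq> d" using pj[of j] by simp
    then show "((x(d:=y)) \<circ> p) j i = (x \<circ> p) j i" by simp
  qed
  finally have "ev n d (contract n T y) (x \<circ> p) = ev n (Suc d) T ((x(d:=y)) \<circ> p)" by simp
  also have "\<dots> = ev n (Suc d) T (x(d:=y))" using assms p' by (simp add: evsym_def)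
  also have "\<dots> = ev n d (contract n T y) x"
    by (subst ev_snoc) (auto intro!: ev_cong)
  finally show "ev n d (contract n T y) (x \<circ> p) = ev n d (contract n T y) x" .
qed

lemma ev_multilin:
  "ev n d T (\<lambda>j i. \<Sum>k<m. A j k * E k i) = ev m d (\<lambda>ys. ev n d T (\<lambda>j. E (ys!j))) A"
proof -
  have "ev n d T (\<lambda>j i. \<Sum>k<m. A j k * E k i)
     = (\<Sum>xs\<in>idx n d. T xs * (\<Sum>ys\<in>idx m d. \<Prod>j<d. A j (ys!j) * E (ys!j) (xs!j)))"
    unfolding ev_def by (simp add: prod_sum_idx[symmetric])
  also have "\<dots> = (\<Sum>xs\<in>idx n d. \<Sum>ys\<in>idx m d. (\<Prod>j<d. A j (ys!j)) * (T xs * (\<Prod>j<d. E (ys!j) (xs!j))))"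
    by (simp add: sum_distrib_left prod.distrib algebra_simps)
  also have "\<dots> = (\<Sum>ys\<in>idx m d. \<Sum>xs\<in>idx n d. (\<Prod>j<d. A j (ys!j)) * (T xs * (\<Prod>j<d. E (ys!j) (xs!j))))"
    by (rule sum.swap)
  also have "\<dots> = ev m d (\<lambda>ys. ev n d T (\<lambda>j. E (ys!j))) A"
    unfolding ev_def by (simp add: sum_distrib_left algebra_simps)
  finally show ?thesis .
qed

lemma ev_scale: "ev n d T (\<lambda>j i. a j * z j i) = (\<Prod>j<d. a j) * ev n d T z"
  unfolding ev_def by (simp add: sum_distrib_left prod.distrib algebra_simps)

lemma unit_comb:
  assumes "unit_vec n e1" "unit_vec n e2" "(\<Sum>i<n. e1 i * e2 i) = 0" "a0\<^sup>2 + a1\<^sup>2 = 1"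
  shows "unit_vec n (\<lambda>i. a0 * e1 i + a1 * e2 i)"
proof -
  have "(\<Sum>i<n. (a0 * e1 i + a1 * e2 i)\<^sup>2) = a0\<^sup>2 * (\<Sum>i<n. (e1 i)\<^sup>2) + a1\<^sup>2 * (\<Sum>i<n. (e2 i)\<^sup>2) + 2 * a0 * a1 * (\<Sum>i<n. e1 i * e2 i)"
    by (simp add: power2_eq_square algebra_simps sum.distrib sum_distrib_left)
  then show ?thesis using assms by (simp add: unit_vec_def)
qed


lemma unit_vec2: "unit_vec 2 f \<longleftrightarrow> (f 0)\<^sup>2 + (f 1)\<^sup>2 = 1"
  by (simp add: unit_vec_def numeral_2_eq_2)

lemma sum2: "(\<Sum>k<(2::nat). g k) = g 0 + (g 1 :: real)"
  by (simp add: numeral_2_eq_2)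

lemma two_dim:
  assumes hyp: "\<forall>T. sym_tensor 2 D T \<longrightarrow> has_sym_best_rank_one 2 D T"
    and sym: "evsym n D T" and w: "unit_vec n w" and y: "unit_vec n y"
    and X: "\<forall>j<D. X j = w \<or> X j = y"
  shows "\<exists>v. unit_vec n v \<and> (ev n D T X)\<^sup>2 \<le> (ev n D T (\<lambda>_. v))\<^sup>2"
proof -
  define c where "c = (\<Sum>i<n. y i * w i)"
  define r where "r = (\<lambda>i. y i - c * w i)"
  define nr where "nr = (\<Sum>i<n. (r i)\<^sup>2)"
  have "nr = (\<Sum>i<n. (y i)\<^sup>2) - 2 * c * (\<Sum>i<n. y i * w i) + c\<^sup>2 * (\<Sum>i<n. (w i)\<^sup>2)"
    unfolding nr_def r_def
    by (simp add: power2_eq_square algebra_simps sum.distrib sum_subtractf sum_distrib_left)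
  then have nr_eq: "nr = 1 - c\<^sup>2" using w y by (simp add: unit_vec_def c_def[symmetric] power2_eq_square)
  have nr_ge: "nr \<ge> 0" unfolding nr_def by (rule sum_nonneg) simp
  show ?thesis
  proof (cases "nr = 0")
    case True
    then have r0: "\<forall>i<n. r i = 0" unfolding nr_def
      using sum_nonneg_eq_0_iff[of "{..<n}" "\<lambda>i. (r i)\<^sup>2"] by simp
    have c2: "c\<^sup>2 = 1" using True nr_eq by simp
    define a where "a = (\<lambda>j. if X j = w then 1 else c)"
    have "ev n D T X = ev n D T (\<lambda>j i. a j * (\<lambda>_. w) j i)"
    proof (rule ev_cong)
      fix j i assume j: "j < D" and i: "i < n"
      show "X j i = a j * (\<lambda>_. w) j i"
      proof (cases "X j = w")
        case True then show ?thesis by (simp add: a_def)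
      next
        case False
        then have "X j = y" using X j by auto
        then show ?thesis using False r0 i by (simp add: a_def r_def)
      qed
    qed
    also have "\<dots> = (\<Prod>j<D. a j) * ev n D T (\<lambda>_. w)" by (rule ev_scale)
    finally have e: "ev n D T X = (\<Prod>j<D. a j) * ev n D T (\<lambda>_. w)" .
    have "(\<Prod>j<D. a j)\<^sup>2 = (\<Prod>j<D. (a j)\<^sup>2)" by (simp add: prod_power_distrib)
    also have "\<dots> = 1" by (rule prod.neutral) (auto simp: a_def c2)
    finally have "(\<Prod>j<D. a j)\<^sup>2 = 1" .
    then have "(ev n D T X)\<^sup>2 = (ev n D T (\<lambda>_. w))\<^sup>2" unfolding e by (simp add: power_mult_distrib)
    then show ?thesis using w by auto
  next
    case False
    then have nrpos: "nr > 0" using nr_ge by simp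
    define s where "s = sqrt nr"
    have s0: "s \<noteq> 0" "s\<^sup>2 = nr" using nrpos by (auto simp: s_def)
    define E where "E = (\<lambda>k::nat. if k = 0 then w else (\<lambda>i. r i / s))"
    define S where "S = (\<lambda>ys. ev n D T (\<lambda>j. E (ys!j)))"
    have e2unit: "unit_vec n (E 1)"
    proof -
      have "(\<Sum>i<n. (r i / s)\<^sup>2) = nr / s\<^sup>2"
        unfolding nr_def by (simp add: power_divide sum_divide_distrib)
      then show ?thesis using s0 nrpos by (simp add: E_def unit_vec_def)
    qed
    have orth: "(\<Sum>i<n. w i * E 1 i) = 0"
    proof -
      have "(\<Sum>i<n. w i * r i) = (\<Sum>i<n. y i * w i) - c * (\<Sum>i<n. (w i)\<^sup>2)"
        unfolding r_def by (simp add: algebra_simps sum_subtractf sum_distrib_left power2_eq_square)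
      then have "(\<Sum>i<n. w i * r i) = 0" using w by (simp add: unit_vec_def c_def)
      then show ?thesis by (simp add: E_def sum_divide_distrib[symmetric])
    qed
    have symS: "sym_tensor 2 D S"
      unfolding sym_tensor_def
    proof (intro ballI allI impI)
      fix ys p assume ys: "ys \<in> idx 2 D" and p: "p permutes {..<D}"
      have l: "length ys = D" using ys by (simp add: idx_def)
      have "S (permute_list p ys) = ev n D T ((\<lambda>j. E (ys!j)) \<circ> p)"
        unfolding S_def by (rule ev_cong) (simp add: permute_list_nth l p)
      also have "\<dots> = S ys" using sym p by (simp add: evsym_def S_def)
      finally show "S (permute_list p ys) = S ys" .
    qed
    obtain b v2 where v2: "unit_vec 2 v2" and best: "best_rank_one 2 D S b (\<lambda>_. v2)"
      using hyp symS by (auto simp: has_sym_best_rank_one_def)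
    define A where "A = (\<lambda>j. if X j = w then (\<lambda>k::nat. if k = 0 then 1 else 0) else (\<lambda>k. if k = 0 then c else s))"
    have Aunit: "\<forall>j<D. unit_vec 2 (A j)"
      using s0 nr_eq by (auto simp: A_def unit_vec2)
    have "ev n D T X = ev n D T (\<lambda>j i. \<Sum>k<2. A j k * E k i)"
    proof (rule ev_cong)
      fix j i assume j: "j < D" and i: "i < n"
      show "X j i = (\<Sum>k<2. A j k * E k i)"
      proof (cases "X j = w")
        case True then show ?thesis by (simp add: A_def E_def sum2)
      next
        case False
        then have "X j = y" using X j by auto
        then show ?thesis using False s0 by (simp add: A_def E_def sum2 r_def)
      qed
    qed
    also have "\<dots> = ev 2 D S A" unfolding S_def by (rule ev_multilin)
    finally have eX: "ev n D T X = ev 2 D S A" .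
    define v where "v = (\<lambda>i. \<Sum>k<2. v2 k * E k i)"
    have ev_v: "ev n D T (\<lambda>_. v) = ev 2 D S (\<lambda>_. v2)"
      unfolding v_def S_def using ev_multilin[where A="\<lambda>_. v2" and m=2 and E=E and n=n and d=D and T=T] by simp
    have vunit: "unit_vec n v"
    proof -
      have "v = (\<lambda>i. v2 0 * w i + v2 1 * E 1 i)" by (simp add: v_def sum2 E_def)
      moreover have "unit_vec n (\<lambda>i. v2 0 * w i + v2 1 * E 1 i)"
        by (rule unit_comb[OF w e2unit orth]) (use v2 in \<open>simp add: unit_vec2\<close>)
      ultimately show ?thesis by simp
    qed
    have "(ev 2 D S A)\<^sup>2 \<le> (ev 2 D S (\<lambda>_. v2))\<^sup>2"
      by (rule best_imp_max[OF best]) (use Aunit in simp)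
    then show ?thesis using eX ev_v vunit by auto
  qed
qed

lemma key:
  assumes hyp: "\<forall>d. 2 \<le> d \<and> d \<le> k \<longrightarrow> (\<forall>T. sym_tensor 2 d T \<longrightarrow> has_sym_best_rank_one 2 d T)"
  shows "1 \<le> d \<Longrightarrow> d \<le> k \<Longrightarrow> evsym n d T \<Longrightarrow> \<forall>j<d. unit_vec n (x j) \<Longrightarrow>
    \<exists>v. unit_vec n v \<and> (ev n d T x)\<^sup>2 \<le> (ev n d T (\<lambda>_. v))\<^sup>2"
proof (induction d arbitrary: T x)
  case 0 then show ?case by simp
next
  case (Suc d)
  show ?case
  proof (cases "d = 0")
    case True
    then have "ev n (Suc d) T x = ev n (Suc d) T (\<lambda>_. x 0)" by (intro ev_cong) auto
    with Suc.prems True show ?thesis by (intro exI[of _ "x 0"]) auto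
  next
    case False
    let ?C = "contract n T (x d)"
    have symC: "evsym n d ?C" using evsym_contract Suc.prems(3) .
    obtain w where w: "unit_vec n w" "(ev n d ?C x)\<^sup>2 \<le> (ev n d ?C (\<lambda>_. w))\<^sup>2"
      using Suc.IH[of ?C x] False Suc.prems symC by auto
    define X where "X = (\<lambda>j. if j < d then w else x d)"
    have e1: "ev n (Suc d) T x = ev n d ?C x" by (rule ev_snoc)
    have "ev n (Suc d) T X = ev n d (contract n T (X d)) X" by (rule ev_snoc)
    also have "\<dots> = ev n d ?C X" by (simp add: X_def)
    also have "\<dots> = ev n d ?C (\<lambda>_. w)" by (rule ev_cong) (simp_all add: X_def)
    finally have e2: "ev n (Suc d) T X = ev n d ?C (\<lambda>_. w)" .
    have h: "\<forall>T. sym_tensor 2 (Suc d) T \<longrightarrow> has_sym_best_rank_one 2 (Suc d) T"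
      using hyp False Suc.prems by auto
    obtain v where v: "unit_vec n v" "(ev n (Suc d) T X)\<^sup>2 \<le> (ev n (Suc d) T (\<lambda>_. v))\<^sup>2"
    proof -
      have xd: "unit_vec n (x d)" using Suc.prems(4) by simp
      have "\<forall>j<Suc d. X j = w \<or> X j = x d" by (simp add: X_def)
      from two_dim[OF h Suc.prems(3) w(1) xd this] show ?thesis using that by blast
    qed
    show ?thesis using v w e1 e2 by auto
  qed
qed

lemma poly_max:
  fixes F :: "(nat \<Rightarrow> real) \<Rightarrow> real"
  assumes cont: "continuous_map (product_topology (\<lambda>_. euclideanreal) {..<n}) euclideanreal F"
    and loc: "\<And>u. F u = F (restrict u {..<n})" and n: "n \<ge> 1"
  shows "\<exists>v0. unit_vec n v0 \<and> (\<forall>v. unit_vec n v \<longrightarrow> F v \<le> F v0)"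
proof -
  let ?X = "product_topology (\<lambda>_. euclideanreal) {..<n}"
  let ?g = "\<lambda>u::nat\<Rightarrow>real. \<Sum>i<n. (u i)\<^sup>2"
  define K where "K = {u \<in> topspace ?X. ?g u \<in> {1}}"
  have gc: "continuous_map ?X euclideanreal ?g"
    by (intro continuous_map_sum continuous_map_real_pow continuous_map_product_projection) auto
  have clK: "closedin ?X K" unfolding K_def
    by (rule closedin_continuous_map_preimage[OF gc]) simp
  have cube: "compactin ?X (PiE {..<n} (\<lambda>_. {-1..1}))"
    by (simp add: compactin_PiE)
  have sub: "K \<subseteq> PiE {..<n} (\<lambda>_. {-1..1})"
  proof
    fix u assume u: "u \<in> K"
    then have u1: "?g u = 1" and ue: "u \<in> extensional {..<n}" by (auto simp: K_def PiE_def)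
    have "\<bar>u i\<bar> \<le> 1" if i: "i < n" for i
    proof -
      have "(u i)\<^sup>2 \<le> ?g u"
        using member_le_sum[of i "{..<n}" "\<lambda>i. (u i)\<^sup>2"] i by simp
      then have "(u i)\<^sup>2 \<le> 1\<^sup>2" using u1 by simp
      then show ?thesis by (metis abs_le_square_iff abs_one)
    qed
    then show "u \<in> PiE {..<n} (\<lambda>_. {-1..1})" using ue by (auto simp: PiE_def Pi_def abs_le_iff)
  qed
  have cK: "compactin ?X K" by (rule closed_compactin[OF cube sub clK])
  have cF: "compact (F ` K)"
    using image_compactin[OF cK cont] by simp
  define e where "e = restrict (\<lambda>i. if i = 0 then 1 else (0::real)) {..<n}"
  have "?g e = (\<Sum>i<n. if i = 0 then 1 else 0)"
    by (rule sum.cong) (auto simp: e_def)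
  also have "\<dots> = 1" using n by simp
  finally have "e \<in> K" by (simp add: K_def e_def)
  then have ne: "F ` K \<noteq> {}" by auto
  obtain m where m: "m \<in> F ` K" "\<forall>y\<in>F ` K. y \<le> m"
    using compact_attains_sup[OF cF ne] by blast
  then obtain v0 where v0: "v0 \<in> K" "m = F v0" by auto
  show ?thesis
  proof (intro exI conjI allI impI)
    show "unit_vec n v0" using v0 by (simp add: K_def unit_vec_def)
    fix v assume v: "unit_vec n v"
    have "restrict v {..<n} \<in> K"
    proof -
      have "?g (restrict v {..<n}) = ?g v" by (rule sum.cong) auto
      then show ?thesis using v by (simp add: K_def unit_vec_def)
    qed
    then show "F v \<le> F v0" using m v0 loc[of v] by auto
  qed
qed

lemma ev_cont:
  "continuous_map (product_topology (\<lambda>_. euclideanreal) {..<n}) euclideanreal (\<lambda>v. (ev n d T (\<lambda>_. v))\<^sup>2)"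
  unfolding ev_def
proof (intro continuous_map_real_pow continuous_map_sum finite_idx continuous_map_real_mult continuous_map_const[THEN iffD2] disjI2 continuous_map_prod finite_lessThan)
  fix xs j assume xs: "xs \<in> idx n d" and j: "j \<in> {..<d}"
  then have "xs ! j < n" by (auto simp: idx_def, metis lessThan_iff nth_mem subsetD)
  then show "continuous_map (product_topology (\<lambda>_. euclideanreal) {..<n}) euclideanreal (\<lambda>v. v (xs ! j))"
    by (intro continuous_map_product_projection[where X="\<lambda>_. euclideanreal", simplified]) simp
qed simp

theorem lemma3p7:
  fixes k :: nat
  assumes "k \<ge> 2"
    and "\<forall>d. 2 \<le> d \<and> d \<le> k \<longrightarrow>
           (\<forall>T. sym_tensor 2 d T \<longrightarrow> has_sym_best_rank_one 2 d T)"
  shows "\<forall>n d T. 3 \<le> n \<and> 2 \<le> d \<and> d \<le> k \<and> sym_tensor n d T \<longrightarrow>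
           has_sym_best_rank_one n d T"
proof (intro allI impI)
  fix n d T assume h: "3 \<le> n \<and> 2 \<le> d \<and> d \<le> k \<and> sym_tensor n d T"
  have es: "evsym n d T" using h sym_evsym by blast
  have loc: "\<And>u. (ev n d T (\<lambda>_. u))\<^sup>2 = (ev n d T (\<lambda>_. restrict u {..<n}))\<^sup>2"
    by (subst ev_cong[where x'="\<lambda>_. restrict _ {..<n}"]) auto
  obtain v0 where v0: "unit_vec n v0"
      "\<forall>v. unit_vec n v \<longrightarrow> (ev n d T (\<lambda>_. v))\<^sup>2 \<le> (ev n d T (\<lambda>_. v0))\<^sup>2"
    using poly_max[OF ev_cont loc] h by auto
  show "has_sym_best_rank_one n d T"
  proof (rule max_imp_best[OF v0(1)], intro allI impI)
    fix x assume x: "\<forall>j<d. unit_vec n (x j)"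
    obtain v where v: "unit_vec n v" "(ev n d T x)\<^sup>2 \<le> (ev n d T (\<lambda>_. v))\<^sup>2"
      using key[OF assms(2), of d n T x] h es x by auto
    then show "(ev n d T x)\<^sup>2 \<le> (ev n d T (\<lambda>_. v0))\<^sup>2" using v0 by (meson order_trans)
  qed
qed

end
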